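(* Let $N\ge 0$ be an integer, let $\mathcal{H}_N$ be a complex inner-product space of dimension $N+1$ with orthonormal basis $|\Psi_0\rangle,\dots,|\Psi_N\rangle$, and let $\beta_0,\dots,\beta_{N-1}>0$ be real numbers, with $\beta_N=0$. Let $\hat A$ be the linear operator on $\mathcal{H}_N$ defined by $\hat A|\Psi_0\rangle=0$ and $\hat A|\Psi_{n+1}\rangle=\sqrt{\beta_n}\,|\Psi_n\rangle$ for $0\le n\le N-1$, with adjoint $\hat A^\dagger$ (so $\hat A^\dagger|\Psi_n\rangle=\sqrt{\beta_n}|\Psi_{n+1}\rangle$, $\hat A^\dagger|\Psi_N\rangle=0$). For $0\le n\le N$ define $g^{(0)}_n=1$ and, for $l\ge 1$, $$g^{(l)}_n=\sum_{s_1=0}^{n}\beta_{s_1}\sum_{s_2=0}^{s_1+1}\beta_{s_2}\cdots\sum_{s_l=0}^{s_{l-1}+1}\beta_{s_l},$$ equivalently by the recursion $g^{(l)}_n=\sum_{s=0}^{n}\beta_s\,g^{(l-1)}_{s+1}$ (with $g^{(l-1)}_{N+1}$ multiplying $\beta_N=0$). Then for every real $\tau$, $$e^{-i\tau(\hat A+\hat A^\dagger)}|\Psi_0\rangle=\sum_{n=0}^{N}\gamma_n(\tau)\,(-i\hat A^\dagger)^n|\Psi_0\rangle,\qquad \gamma_n(\tau)=\sum_{l=0}^{\infty}\frac{(-1)^l\,\tau^{n+2l}}{(n+2l)!}\,g^{(l)}_n .$$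
   Context: This describes the time evolution (interaction picture, dimensionless time $\tau$) of the state $|\Psi_0\rangle$ annihilated by the ladder operator $\hat A$, within a finite-dimensional invariant subspace on which the interaction Hamiltonian equals $\hat A+\hat A^\dagger$. Convention: $\beta_s=0$ for $s\ge N$. *)

theory Defs
  imports Complex_Main
begin

text \<open>The space H_N is modelled as coordinate vectors  nat \<Rightarrow> complex  w.r.t. the
orthonormal basis Psi_0,...,Psi_N; coordinate n is the coefficient of Psi_n,
coordinates n > N are unused (always 0 for the vectors considered).\<close>

definition basis0 :: "nat \<Rightarrow> complex" where
  "basis0 = (\<lambda>n. if n = 0 then 1 else 0)"

definition ladderA :: "nat \<Rightarrow> (nat \<Rightarrow> real) \<Rightarrow> (nat \<Rightarrow> complex) \<Rightarrow> nat \<Rightarrow> complex" where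
  "ladderA N \<beta> v = (\<lambda>n. if n < N then complex_of_real (sqrt (\<beta> n)) * v (Suc n) else 0)"

definition ladderAdag :: "nat \<Rightarrow> (nat \<Rightarrow> real) \<Rightarrow> (nat \<Rightarrow> complex) \<Rightarrow> nat \<Rightarrow> complex" where
  "ladderAdag N \<beta> v = (\<lambda>n. if 1 \<le> n \<and> n \<le> N then complex_of_real (sqrt (\<beta> (n - 1))) * v (n - 1) else 0)"

definition hamil :: "nat \<Rightarrow> (nat \<Rightarrow> real) \<Rightarrow> (nat \<Rightarrow> complex) \<Rightarrow> nat \<Rightarrow> complex" where
  "hamil N \<beta> v = (\<lambda>n. ladderA N \<beta> v n + ladderAdag N \<beta> v n)"

definition evol :: "((nat \<Rightarrow> complex) \<Rightarrow> nat \<Rightarrow> complex) \<Rightarrow> real \<Rightarrow> (nat \<Rightarrow> complex) \<Rightarrow> nat \<Rightarrow> complex" where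
  "evol H \<tau> v = (\<lambda>m. \<Sum>k. ((- \<i> * complex_of_real \<tau>) ^ k / of_nat (fact k)) * (H ^^ k) v m)"

fun gcoef :: "(nat \<Rightarrow> real) \<Rightarrow> nat \<Rightarrow> nat \<Rightarrow> real" where
  "gcoef \<beta> 0 n = 1"
| "gcoef \<beta> (Suc l) n = (\<Sum>s = 0..n. \<beta> s * gcoef \<beta> l (Suc s))"

definition gamma_coef :: "(nat \<Rightarrow> real) \<Rightarrow> nat \<Rightarrow> real \<Rightarrow> real" where
  "gamma_coef \<beta> n \<tau> = (\<Sum>l. (-1) ^ l * \<tau> ^ (n + 2 * l) / fact (n + 2 * l) * gcoef \<beta> l n)"

end

theory Submission
  imports Defs
begin

definition cc :: "(nat \<Rightarrow> real) \<Rightarrow> nat \<Rightarrow> real" where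
  "cc \<beta> n = (\<Prod>k<n. sqrt (\<beta> k))"

lemma cc_Suc: "cc \<beta> (Suc n) = cc \<beta> n * sqrt (\<beta> n)"
  by (simp add: cc_def)

lemma gcoef_Suc_Suc:
  "gcoef \<beta> (Suc l) (Suc m) = gcoef \<beta> (Suc l) m + \<beta> (Suc m) * gcoef \<beta> l (Suc (Suc m))"
  by simp

lemma gcoef_Suc_0: "gcoef \<beta> (Suc l) 0 = \<beta> 0 * gcoef \<beta> l 1"
  by simp

lemma Hpow:
  assumes pos: "\<forall>n < N. \<beta> n > 0" and zero: "\<forall>s \<ge> N. \<beta> s = 0"
  shows "(hamil N \<beta> ^^ k) basis0 m =
    (if m \<le> N \<and> m \<le> k \<and> even (k - m)
     then complex_of_real (gcoef \<beta> ((k - m) div 2) m * cc \<beta> m) else 0)"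
proof (induction k arbitrary: m)
  case 0
  then show ?case by (simp add: basis0_def cc_def)
next
  case (Suc k)
  have bnn: "\<beta> n \<ge> 0" for n using pos zero
    by (metis less_eq_real_def not_le)
  have sq: "sqrt (\<beta> n) * sqrt (\<beta> n) = \<beta> n" for n using bnn[of n] by simp
  let ?v = "(hamil N \<beta> ^^ k) basis0"
  have H: "(hamil N \<beta> ^^ Suc k) basis0 m =
     (if m < N then complex_of_real (sqrt (\<beta> m)) * ?v (Suc m) else 0)
     + (if 1 \<le> m \<and> m \<le> N then complex_of_real (sqrt (\<beta> (m - 1))) * ?v (m - 1) else 0)"
    by (simp add: hamil_def ladderA_def ladderAdag_def)
  show ?case
  proof (cases "m \<le> N")
    case False
    then show ?thesis using H by simp
  next
    case mN: True
    show ?thesis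
    proof (cases "m \<le> Suc k \<and> even (Suc k - m)")
      case False
      have t1: "(if m < N then complex_of_real (sqrt (\<beta> m)) * ?v (Suc m) else 0) = 0"
        using False by (auto simp: Suc.IH)
      have t2: "(if 1 \<le> m \<and> m \<le> N then complex_of_real (sqrt (\<beta> (m - 1))) * ?v (m - 1) else 0) = 0"
        using False by (auto simp: Suc.IH Suc_diff_le)
      have nc: "\<not> (m \<le> N \<and> m \<le> Suc k \<and> even (Suc k - m))" using False by simp
      show ?thesis using H t1 t2 by (simp only: nc if_False) simp
    next
      case True
      then obtain l where l: "Suc k - m = 2 * l" and mk: "m \<le> Suc k" by (meson evenE)
      show ?thesis
      proof (cases l)
        case 0
        then have mk': "m = Suc k" using l mk by simp
        have t1: "(if m < N then complex_of_real (sqrt (\<beta> m)) * ?v (Suc m) else 0) = 0"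
          using mk' by (auto simp: Suc.IH)
        have "?v k = complex_of_real (cc \<beta> k)" using mk' mN by (simp add: Suc.IH)
        then have t2: "(if 1 \<le> m \<and> m \<le> N then complex_of_real (sqrt (\<beta> (m - 1))) * ?v (m - 1) else 0)
           = complex_of_real (cc \<beta> m)"
          using mk' mN by (simp add: cc_Suc mult.commute)
        show ?thesis using H t1 t2 mk' mN by simp
      next
        case (Suc l')
        have km: "k - m = 2 * l' + 1" "m \<le> k" using l Suc mk by auto
        have t1: "(if m < N then complex_of_real (sqrt (\<beta> m)) * ?v (Suc m) else 0)
           = complex_of_real (\<beta> m * gcoef \<beta> l' (Suc m) * cc \<beta> m)"
        proof (cases "m < N")
          case True
          have "k - Suc m = 2 * l'" "Suc m \<le> k" using km by simp_all
          then have "?v (Suc m) = complex_of_real (gcoef \<beta> l' (Suc m) * cc \<beta> (Suc m))"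
            using True km by (simp add: Suc.IH)
          then show ?thesis using True
            by (simp add: cc_Suc) (metis (no_types, opaque_lifting) mult.assoc mult.commute of_real_mult sq)
        next
          case False
          then have "m = N" using mN by simp
          then show ?thesis using False zero by simp
        qed
        have t2: "(if 1 \<le> m \<and> m \<le> N then complex_of_real (sqrt (\<beta> (m - 1))) * ?v (m - 1) else 0)
           = complex_of_real (if m = 0 then 0 else gcoef \<beta> (Suc l') (m - 1) * cc \<beta> m)"
        proof (cases m)
          case 0 then show ?thesis by simp
        next
          case (Suc m')
          have "k - m' = 2 * Suc l'" using km Suc by simp
          then have "?v m' = complex_of_real (gcoef \<beta> (Suc l') m' * cc \<beta> m')"
            using km Suc mN by (simp add: Suc.IH)
          then show ?thesis using Suc mN by (simp add: cc_Suc mult.commute mult.left_commute)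
        qed
        have g: "gcoef \<beta> (Suc l') m = \<beta> m * gcoef \<beta> l' (Suc m) + (if m = 0 then 0 else gcoef \<beta> (Suc l') (m - 1))"
          by (cases m) simp_all
        have "(Suc k - m) div 2 = Suc l'" using l Suc by simp
        have cond: "m \<le> N \<and> m \<le> Suc k \<and> even (Suc k - m)" using l mk mN by simp
        have "(hamil N \<beta> ^^ Suc k) basis0 m = complex_of_real (\<beta> m * gcoef \<beta> l' (Suc m) * cc \<beta> m)
            + complex_of_real (if m = 0 then 0 else gcoef \<beta> (Suc l') (m - 1) * cc \<beta> m)"
          using H t1 t2 by simp
        also have "\<dots> = complex_of_real (gcoef \<beta> (Suc l') m * cc \<beta> m)"
          unfolding g by (simp add: distrib_right)
        finally show ?thesis using cond \<open>(Suc k - m) div 2 = Suc l'\<close> by (simp only: if_True simp_thms)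
      qed
    qed
  qed
qed

lemma Apow:
  "((\<lambda>v. (\<lambda>j. - \<i> * ladderAdag N \<beta> v j)) ^^ n) basis0 m =
    (if m = n \<and> n \<le> N then (- \<i>) ^ n * complex_of_real (cc \<beta> n) else 0)"
proof (induction n arbitrary: m)
  case 0
  then show ?case by (simp add: basis0_def cc_def)
next
  case (Suc n)
  have st: "((\<lambda>v. (\<lambda>j. - \<i> * ladderAdag N \<beta> v j)) ^^ Suc n) basis0 m
     = - \<i> * (if 1 \<le> m \<and> m \<le> N then complex_of_real (sqrt (\<beta> (m - 1))) *
        ((\<lambda>v. (\<lambda>j. - \<i> * ladderAdag N \<beta> v j)) ^^ n) basis0 (m - 1) else 0)"
    by (simp add: ladderAdag_def)
  show ?case
    unfolding st Suc.IH
    by (cases m) (auto simp: cc_Suc mult.commute mult.left_commute)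
qed

lemma gbound:
  assumes bnn: "\<And>n. \<beta> n \<ge> 0" and zero: "\<forall>s \<ge> N. \<beta> s = 0"
  shows "0 \<le> gcoef \<beta> l n \<and> gcoef \<beta> l n \<le> (\<Sum>s<N. \<beta> s) ^ l"
proof (induction l arbitrary: n)
  case 0
  then show ?case by simp
next
  case (Suc l)
  let ?M = "\<Sum>s<N. \<beta> s"
  have M0: "0 \<le> ?M" using bnn by (simp add: sum_nonneg)
  have s1: "(\<Sum>s = 0..n. \<beta> s) \<le> (\<Sum>s<n + 1 + N. \<beta> s)"
    by (rule sum_mono2) (auto simp: bnn)
  have s2: "(\<Sum>s<N. \<beta> s) = (\<Sum>s<n + 1 + N. \<beta> s)"
    by (rule sum.mono_neutral_left) (auto simp: zero)
  have "gcoef \<beta> (Suc l) n \<le> (\<Sum>s = 0..n. \<beta> s * ?M ^ l)"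
    by (simp only: gcoef.simps) (rule sum_mono, rule mult_left_mono, use Suc.IH bnn in auto)
  also have "\<dots> = (\<Sum>s = 0..n. \<beta> s) * ?M ^ l" by (simp add: sum_distrib_right)
  also have "\<dots> \<le> ?M * ?M ^ l" using s1 s2 M0 by (simp add: mult_right_mono)
  finally have up: "gcoef \<beta> (Suc l) n \<le> ?M ^ Suc l" by simp
  have "0 \<le> gcoef \<beta> (Suc l) n"
    by (simp only: gcoef.simps) (rule sum_nonneg, use Suc.IH bnn in auto)
  then show ?case using up by simp
qed

lemma summable_sub:
  fixes y :: real
  assumes "y \<ge> 0"
  shows "summable (\<lambda>l. y ^ (m + 2 * l) / fact (m + 2 * l))"
proof -
  let ?g = "\<lambda>l::nat. m + 2 * l"
  let ?f = "\<lambda>k. if k \<in> range ?g then y ^ k / fact k else (0::real)"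
  have sm: "strict_mono ?g" by (rule strict_monoI) simp
  have "summable (\<lambda>k. inverse (fact k) * y ^ k)" by (rule summable_exp)
  then have "summable ?f"
    by (rule summable_comparison_test'[where N=0]) (auto simp: assms divide_inverse mult.commute)
  then have "summable (\<lambda>l. ?f (?g l))"
    using summable_mono_reindex[OF sm, of ?f] by auto
  then show ?thesis by simp
qed

lemma summable_gamma:
  assumes bnn: "\<And>n. \<beta> n \<ge> 0" and zero: "\<forall>s \<ge> N. \<beta> s = 0"
  shows "summable (\<lambda>l. (-1) ^ l * \<tau> ^ (m + 2 * l) / fact (m + 2 * l) * gcoef \<beta> l m)"
proof -
  let ?M = "\<Sum>s<N. \<beta> s"
  define K where "K = 1 + ?M"
  have M0: "0 \<le> ?M" using bnn by (simp add: sum_nonneg)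
  have K1: "1 \<le> K" using M0 by (simp add: K_def)
  have b: "norm ((-1) ^ l * \<tau> ^ (m + 2 * l) / fact (m + 2 * l) * gcoef \<beta> l m)
      \<le> (\<bar>\<tau>\<bar> * K) ^ (m + 2 * l) / fact (m + 2 * l)" for l
  proof -
    have g: "0 \<le> gcoef \<beta> l m" "gcoef \<beta> l m \<le> ?M ^ l" using gbound[OF bnn zero] by auto
    have "?M ^ l \<le> K ^ l" using M0 by (intro power_mono) (auto simp: K_def)
    also have "\<dots> \<le> K ^ (m + 2 * l)" using K1 by (intro power_increasing) auto
    finally have gK: "gcoef \<beta> l m \<le> K ^ (m + 2 * l)" using g by linarith
    have "norm ((-1) ^ l * \<tau> ^ (m + 2 * l) / fact (m + 2 * l) * gcoef \<beta> l m)
        = \<bar>\<tau>\<bar> ^ (m + 2 * l) / fact (m + 2 * l) * gcoef \<beta> l m"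
      using g by (simp add: abs_mult power_abs)
    also have "\<dots> \<le> \<bar>\<tau>\<bar> ^ (m + 2 * l) / fact (m + 2 * l) * K ^ (m + 2 * l)"
      using gK by (intro mult_left_mono) auto
    also have "\<dots> = (\<bar>\<tau>\<bar> * K) ^ (m + 2 * l) / fact (m + 2 * l)"
      by (simp add: power_mult_distrib)
    finally show ?thesis .
  qed
  show ?thesis
  proof (rule summable_comparison_test'[where N=0])
    show "summable (\<lambda>l. (\<bar>\<tau>\<bar> * K) ^ (m + 2 * l) / fact (m + 2 * l))"
      by (rule summable_sub) (use K1 in simp)
  qed (use b in blast)
qed

theorem corollary1:
  fixes N :: nat and \<beta> :: "nat \<Rightarrow> real" and \<tau> :: real
  assumes "\<forall>n < N. \<beta> n > 0"
    and "\<forall>s \<ge> N. \<beta> s = 0"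
  shows "evol (hamil N \<beta>) \<tau> basis0 =
    (\<lambda>m. \<Sum>n = 0..N. complex_of_real (gamma_coef \<beta> n \<tau>) *
          (((\<lambda>v. (\<lambda>j. - \<i> * ladderAdag N \<beta> v j)) ^^ n) basis0) m)"
proof
  fix m
  have bnn: "\<beta> n \<ge> 0" for n using assms
    by (metis less_eq_real_def not_le)
  let ?f = "\<lambda>k. ((- \<i> * complex_of_real \<tau>) ^ k / of_nat (fact k)) * (hamil N \<beta> ^^ k) basis0 m"
  have L: "evol (hamil N \<beta>) \<tau> basis0 m = suminf ?f" by (simp add: evol_def)
  show "evol (hamil N \<beta>) \<tau> basis0 m = (\<Sum>n = 0..N. complex_of_real (gamma_coef \<beta> n \<tau>) *
          (((\<lambda>v. (\<lambda>j. - \<i> * ladderAdag N \<beta> v j)) ^^ n) basis0) m)"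
  proof (cases "m \<le> N")
    case False
    then have "?f = (\<lambda>k. 0)" by (simp add: Hpow[OF assms])
    then show ?thesis using False L by (simp only: Apow) simp
  next
    case True
    let ?g = "\<lambda>l::nat. m + 2 * l"
    let ?r = "\<lambda>l. (-1) ^ l * \<tau> ^ (m + 2 * l) / fact (m + 2 * l) * gcoef \<beta> l m"
    let ?C = "(- \<i>) ^ m * complex_of_real (cc \<beta> m)"
    have sm: "strict_mono ?g" by (rule strict_monoI) simp
    have z: "?f n = 0" if "n \<notin> range ?g" for n
    proof -
      have "\<not> (m \<le> n \<and> even (n - m))"
      proof
        assume "m \<le> n \<and> even (n - m)"
        then have "n = ?g ((n - m) div 2)" by auto
        then show False using that by blast
      qed
      then have "\<not> (m \<le> N \<and> m \<le> n \<and> even (n - m))" by blast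
      then show ?thesis by (simp only: Hpow[OF assms] if_False) simp
    qed
    have fg: "?f (?g l) = complex_of_real (?r l) * ?C" for l
    proof -
      have p: "(- \<i> * complex_of_real \<tau>) ^ (m + 2 * l) = (- \<i>) ^ m * (-1) ^ l * complex_of_real \<tau> ^ (m + 2 * l)"
      proof -
        have "(- \<i>) ^ (m + 2 * l) = (- \<i>) ^ m * ((- \<i>) ^ 2) ^ l"
          by (simp only: power_add power_mult)
        also have "\<dots> = (- \<i>) ^ m * (-1) ^ l" by (simp add: power2_eq_square)
        finally have e: "(- \<i>) ^ (m + 2 * l) = (- \<i>) ^ m * (-1) ^ l" .
        show ?thesis by (simp only: power_mult_distrib e)
      qed
      have p': "(- (\<i> * complex_of_real \<tau>)) ^ (m + 2 * l) = (- 1) ^ l * (complex_of_real \<tau> ^ (m + 2 * l) * (- \<i>) ^ m)"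
        using p by (simp add: mult_ac)
      show ?thesis using True
        by (simp add: Hpow[OF assms] p')
    qed
    have "gamma_coef \<beta> m \<tau> = suminf ?r" by (simp add: gamma_coef_def)
    then have rs: "?r sums gamma_coef \<beta> m \<tau>"
      using summable_gamma[OF bnn assms(2)] by (simp add: summable_sums)
    have "(\<lambda>l. complex_of_real (?r l) * ?C) sums (complex_of_real (gamma_coef \<beta> m \<tau>) * ?C)"
      by (rule sums_mult2, rule sums_of_real, rule rs)
    then have "suminf (\<lambda>l. ?f (?g l)) = complex_of_real (gamma_coef \<beta> m \<tau>) * ?C"
      by (simp only: fg sums_unique[symmetric])
    then have "suminf ?f = complex_of_real (gamma_coef \<beta> m \<tau>) * ?C"
      using suminf_mono_reindex[OF sm, of ?f] z by simp
    moreover have "(\<Sum>n = 0..N. complex_of_real (gamma_coef \<beta> n \<tau>) *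
            (if m = n \<and> n \<le> N then (- \<i>) ^ n * complex_of_real (cc \<beta> n) else 0))
        = complex_of_real (gamma_coef \<beta> m \<tau>) * ?C"
      using True by (simp add: if_distrib[of "\<lambda>x. _ * x"] sum.delta cong: if_cong)
    ultimately show ?thesis using L by (simp only: Apow)
  qed
qed

end
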